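(* Let $X\neq\{0\}$ be a Hausdorff topological vector space over $\mathbb{K}=\mathbb{R}$ or $\mathbb{C}$ and let $A$ be a nonvoid subset of $X$. If $(x_n)_{n=1}^\infty$ is an $\ell_\infty$-independent sequence of elements of $X$ and $A$ is $[(x_n)_{n=1}^\infty,\mathcal{S}]$-lineable for some infinite dimensional subspace $\mathcal{S}$ of $\ell_\infty$, then $A$ is lineable.
   Context: $\ell_\infty$ is the space of bounded scalar sequences, a subspace of $\mathbb{K}^{\mathbb{N}}$. A sequence $(x_n)_{n=1}^\infty$ in a topological vector space $X$ is $\ell_\infty$-independent if whenever $(c_n)_{n=1}^\infty\in\ell_\infty$ and $\sum_{n=1}^\infty c_nx_n=0$ (convergent series in $X$), then $c_n=0$ for all $n$. For a subspace $\mathcal{S}$ of $\mathbb{K}^{\mathbb{N}}$, a subset $A\subset X$ is $[(x_n)_{n=1}^\infty,\mathcal{S}]$-lineable if for each $(c_n)_{n=1}^\infty\in\mathcal{S}$ the series $\sum_{n=1}^\infty c_nx_n$ converges in $X$ to a vector of $A\cup\{0\}$. A subset $A$ is lineable if $A\cup\{0\}$ contains an infinite dimensional vector subspace. *)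

theory Defs
  imports "HOL-Analysis.Analysis" "HOL-Library.Function_Algebras"
begin

text \<open>Scalars are real or complex; the scalar multiplication of the vector space X is
  passed explicitly as sc (scaleR resp. scaleC in the main theorem).\<close>

definition tvs :: "('k::real_normed_field \<Rightarrow> 'a::{topological_space,ab_group_add} \<Rightarrow> 'a) \<Rightarrow> bool" where
  "tvs sc \<longleftrightarrow> module sc
     \<and> continuous_on UNIV (\<lambda>p::'a \<times> 'a. fst p + snd p)
     \<and> continuous_on UNIV (\<lambda>p::'k \<times> 'a. sc (fst p) (snd p))"

text \<open>ell_infinity: bounded scalar sequences (indices start at 0 instead of 1).\<close>
definition linf :: "(nat \<Rightarrow> 'k::real_normed_field) set" where
  "linf = {c. Bseq c}"

definition seq_scale :: "'k::real_normed_field \<Rightarrow> (nat \<Rightarrow> 'k) \<Rightarrow> (nat \<Rightarrow> 'k)" where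
  "seq_scale a c = (\<lambda>n. a * c n)"

definition infinite_dim_subspace :: "('k::field \<Rightarrow> 'b::ab_group_add \<Rightarrow> 'b) \<Rightarrow> 'b set \<Rightarrow> bool" where
  "infinite_dim_subspace sc V \<longleftrightarrow> module.subspace sc V
     \<and> \<not> (\<exists>B. finite B \<and> B \<subseteq> V \<and> module.span sc B = V)"

definition linf_independent ::
  "('k::real_normed_field \<Rightarrow> 'a::{topological_space,ab_group_add} \<Rightarrow> 'a) \<Rightarrow> (nat \<Rightarrow> 'a) \<Rightarrow> bool" where
  "linf_independent sc x \<longleftrightarrow>
     (\<forall>c \<in> linf. (\<lambda>n. sc (c n) (x n)) sums 0 \<longrightarrow> (\<forall>n. c n = 0))"

definition seq_lineable ::
  "('k::real_normed_field \<Rightarrow> 'a::{topological_space,ab_group_add} \<Rightarrow> 'a) \<Rightarrow> 'a set \<Rightarrow> (nat \<Rightarrow> 'a) \<Rightarrow> (nat \<Rightarrow> 'k) set \<Rightarrow> bool" where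
  "seq_lineable sc A x S \<longleftrightarrow>
     (\<forall>c \<in> S. \<exists>y \<in> A \<union> {0}. (\<lambda>n. sc (c n) (x n)) sums y)"

definition lineable ::
  "('k::field \<Rightarrow> 'a::ab_group_add \<Rightarrow> 'a) \<Rightarrow> 'a set \<Rightarrow> bool" where
  "lineable sc A \<longleftrightarrow> (\<exists>V. infinite_dim_subspace sc V \<and> V \<subseteq> A \<union> {0})"

end

theory Submission
  imports Defs
begin

lemma tvs_add_tendsto:
  fixes sc :: "'k::real_normed_field \<Rightarrow> 'a::{ab_group_add,t2_space} \<Rightarrow> 'a"
  fixes f g :: "'b \<Rightarrow> 'a"
  assumes "tvs sc" "(f \<longlongrightarrow> a) F" "(g \<longlongrightarrow> b) F"
  shows "((\<lambda>n. f n + g n) \<longlongrightarrow> a + b) F"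
proof -
  have "continuous_on UNIV (\<lambda>p::'a\<times>'a. fst p + snd p)" using assms(1) unfolding tvs_def by blast
  hence "isCont (\<lambda>p::'a\<times>'a. fst p + snd p) (a,b)" by (simp add: continuous_on_eq_continuous_at)
  from isCont_tendsto_compose[OF this tendsto_Pair[OF assms(2,3)]] show ?thesis by simp
qed

lemma tvs_scale_tendsto:
  fixes sc :: "'k::real_normed_field \<Rightarrow> 'a::{ab_group_add,t2_space} \<Rightarrow> 'a"
  fixes f :: "'b \<Rightarrow> 'a"
  assumes "tvs sc" "(f \<longlongrightarrow> a) F"
  shows "((\<lambda>n. sc k (f n)) \<longlongrightarrow> sc k a) F"
proof -
  have "continuous_on UNIV (\<lambda>p::'k\<times>'a. sc (fst p) (snd p))" using assms(1) unfolding tvs_def by blast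
  hence "isCont (\<lambda>p::'k\<times>'a. sc (fst p) (snd p)) (k,a)" by (simp add: continuous_on_eq_continuous_at)
  from isCont_tendsto_compose[OF this tendsto_Pair[OF tendsto_const assms(2)]] show ?thesis by simp
qed

lemma main_gen:
  fixes sc :: "'k::real_normed_field \<Rightarrow> 'a::{ab_group_add,t2_space} \<Rightarrow> 'a"
    and S :: "(nat \<Rightarrow> 'k) set"
  assumes tvs: "tvs sc" and ind: "linf_independent sc x" and Sl: "S \<subseteq> linf"
    and Sd: "infinite_dim_subspace seq_scale S" and sl: "seq_lineable sc A x S"
  shows "lineable sc A"
proof -
  have M: "module sc" using tvs tvs_def by blast
  have MS: "module (seq_scale :: 'k \<Rightarrow> (nat \<Rightarrow> 'k) \<Rightarrow> _)"
    unfolding module_def seq_scale_def by (auto simp: algebra_simps fun_eq_iff)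
  interpret X: module sc by (rule M)
  interpret Q: module "seq_scale :: 'k \<Rightarrow> (nat \<Rightarrow> 'k) \<Rightarrow> _" by (rule MS)
  define R where "R c y \<longleftrightarrow> (\<lambda>n. sc (c n) (x n)) sums y" for c y
  define V where "V = {y. \<exists>c\<in>S. R c y}"
  have subS: "Q.subspace S" and notfin: "\<not>(\<exists>B. finite B \<and> B \<subseteq> S \<and> Q.span B = S)"
    using Sd infinite_dim_subspace_def by blast+
  have R0: "R 0 0" unfolding R_def by simp
  have Radd: "R (c + d) (a + b)" if "R c a" "R d b" for c d a b
  proof -
    have "(\<lambda>n. sum (\<lambda>i. sc (c i) (x i)) {..<n} + sum (\<lambda>i. sc (d i) (x i)) {..<n}) \<longlonglongrightarrow> a + b"
      using that unfolding R_def sums_def by (intro tvs_add_tendsto[OF tvs])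
    thus ?thesis unfolding R_def sums_def
      by (simp add: X.scale_left_distrib sum.distrib)
  qed
  have Rsc: "R (seq_scale k c) (sc k a)" if "R c a" for c k a
  proof -
    have "(\<lambda>n. sc k (sum (\<lambda>i. sc (c i) (x i)) {..<n})) \<longlonglongrightarrow> sc k a"
      using that unfolding R_def sums_def by (intro tvs_scale_tendsto[OF tvs])
    thus ?thesis unfolding R_def sums_def seq_scale_def
      by (simp add: X.scale_sum_right)
  qed
  have Runiq: "a = b" if "R c a" "R c b" for c a b
    using that unfolding R_def by (rule sums_unique2)
  have Rinj: "c = d" if "c \<in> S" "d \<in> S" "R c a" "R d a" for c d a
  proof -
    have "R (c + seq_scale (-1) d) (a + sc (-1) a)" using that by (intro Radd Rsc)
    hence "R (c + seq_scale (-1) d) 0" by simp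
    moreover have "c + seq_scale (-1) d \<in> S"
      using that subS by (intro Q.subspace_add Q.subspace_scale) auto
    ultimately have "\<forall>n. (c + seq_scale (-1) d) n = 0"
      using ind Sl unfolding linf_independent_def R_def by (metis subsetD)
    thus ?thesis by (auto simp: seq_scale_def fun_eq_iff)
  qed
  have subV: "X.subspace V"
    unfolding X.subspace_def V_def
  proof (intro conjI ballI allI)
    show "0 \<in> {y. \<exists>c\<in>S. R c y}" using R0 Q.subspace_0[OF subS] by auto
  next
    fix a b assume "a \<in> {y. \<exists>c\<in>S. R c y}" "b \<in> {y. \<exists>c\<in>S. R c y}"
    then obtain c d where "c \<in> S" "d \<in> S" "R c a" "R d b" by auto
    thus "a + b \<in> {y. \<exists>c\<in>S. R c y}" using Radd Q.subspace_add[OF subS] by blast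
  next
    fix k a assume "a \<in> {y. \<exists>c\<in>S. R c y}"
    then obtain c where "c \<in> S" "R c a" by auto
    thus "sc k a \<in> {y. \<exists>c\<in>S. R c y}" using Rsc Q.subspace_scale[OF subS] by blast
  qed
  have VA: "V \<subseteq> A \<union> {0}"
  proof
    fix y assume "y \<in> V"
    then obtain c where c: "c \<in> S" "R c y" unfolding V_def by auto
    then obtain y' where "y' \<in> A \<union> {0}" "R c y'" using sl unfolding seq_lineable_def R_def by blast
    with c Runiq show "y \<in> A \<union> {0}" by metis
  qed
  have "\<not> (\<exists>B. finite B \<and> B \<subseteq> V \<and> X.span B = V)"
  proof
    assume "\<exists>B. finite B \<and> B \<subseteq> V \<and> X.span B = V"
    then obtain B where B: "finite B" "B \<subseteq> V" "X.span B = V" by blast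
    have "\<forall>b\<in>B. \<exists>c. c \<in> S \<and> R c b" using B(2) unfolding V_def by auto
    then obtain cb where cb: "\<And>b. b \<in> B \<Longrightarrow> cb b \<in> S \<and> R (cb b) b" by metis
    define C where "C = cb ` B"
    have CS: "C \<subseteq> S" using cb unfolding C_def by auto
    have spanCS: "Q.span C \<subseteq> S" using Q.span_minimal[OF CS subS] .
    have key: "\<exists>d\<in>Q.span C. R d y" if "y \<in> X.span B" for y
      using that
    proof (induction rule: X.span_induct_alt)
      case base
      then show ?case using R0 Q.span_zero by blast
    next
      case (step k b y)
      then obtain d where d: "d \<in> Q.span C" "R d y" by blast
      have "seq_scale k (cb b) + d \<in> Q.span C"
        using step(1) d(1) unfolding C_def
        by (meson Q.span_add Q.span_scale Q.span_base imageI)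
      moreover have "R (seq_scale k (cb b) + d) (sc k b + y)"
        using cb[OF step(1)] d(2) by (intro Radd Rsc) auto
      ultimately show ?case by blast
    qed
    have "S \<subseteq> Q.span C"
    proof
      fix s assume s: "s \<in> S"
      then obtain y where y: "y \<in> A \<union> {0}" "R s y" using sl unfolding seq_lineable_def R_def by blast
      hence "y \<in> X.span B" using B(3) s unfolding V_def by auto
      then obtain d where d: "d \<in> Q.span C" "R d y" using key by blast
      have "s = d" using Rinj[OF s _ y(2) d(2)] d(1) spanCS by auto
      thus "s \<in> Q.span C" using d by simp
    qed
    hence "Q.span C = S" using spanCS by auto
    moreover have "finite C" using B(1) unfolding C_def by simp
    ultimately show False using notfin CS by blast
  qed
  hence "infinite_dim_subspace sc V" using subV unfolding infinite_dim_subspace_def by blast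
  thus ?thesis using VA unfolding lineable_def by blast
qed

theorem mainTheorem2:
  shows "(\<forall>(A :: 'a::{real_vector,t2_space} set) (x :: nat \<Rightarrow> 'a) (S :: (nat \<Rightarrow> real) set).
            tvs (scaleR :: real \<Rightarrow> 'a \<Rightarrow> 'a) \<and> (\<exists>v::'a. v \<noteq> 0) \<and> A \<noteq> {}
            \<and> linf_independent scaleR x
            \<and> S \<subseteq> linf \<and> infinite_dim_subspace seq_scale S
            \<and> seq_lineable scaleR A x S
            \<longrightarrow> lineable scaleR A)
       \<and> (\<forall>(sc :: complex \<Rightarrow> 'b \<Rightarrow> 'b) (A :: 'b::{ab_group_add,t2_space} set) (x :: nat \<Rightarrow> 'b) (S :: (nat \<Rightarrow> complex) set).
            tvs sc \<and> (\<exists>v::'b. v \<noteq> 0) \<and> A \<noteq> {}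
            \<and> linf_independent sc x
            \<and> S \<subseteq> linf \<and> infinite_dim_subspace seq_scale S
            \<and> seq_lineable sc A x S
            \<longrightarrow> lineable sc A)"
  apply (intro conjI allI impI)
   apply (elim conjE, rule main_gen; assumption)
  apply (elim conjE, rule main_gen; assumption)
  done

end
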